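(* Let $w$ be an infinite word and $n,n',n''$ non-negative integers with $n'\le n''\le n+n'$. Assume the prefixes of $w$ of lengths $n$, $n'$, $n''$ are palindromes, denoted $a$, $a'$, $a''$ respectively, and let $a_0$ be the prefix of $w$ of length $n+n'-n''$. Then: (1) there is a word $b$ such that $a=a_0b$ and $a''=a'b$; (2) if $n''\ge n-n'$, then $a_0$ is a palindrome.
   Context: Infinite words are right-infinite sequences of letters; a finite word is a palindrome if it equals its reversal, the empty word being a palindrome. *)

theory Defs
  imports Main
begin

definition pref :: "(nat \<Rightarrow> 'a) \<Rightarrow> nat \<Rightarrow> 'a list" where
  "pref w k = map w [0..<k]"

definition palindrome :: "'a list \<Rightarrow> bool" where
  "palindrome x \<longleftrightarrow> rev x = x"

end

theory Submission
  imports Defs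
begin

lemma pal_pref: "palindrome (pref w n) \<longleftrightarrow> (\<forall>i<n. w i = w (n - 1 - i))"
proof
  assume h: "palindrome (pref w n)"
  show "\<forall>i<n. w i = w (n - 1 - i)"
  proof (intro allI impI)
    fix i assume i: "i < n"
    have "rev (pref w n) ! i = pref w n ! i" using h by (simp add: palindrome_def)
    then show "w i = w (n - 1 - i)" using i by (simp add: pref_def rev_nth)
  qed
next
  assume h: "\<forall>i<n. w i = w (n - 1 - i)"
  show "palindrome (pref w n)" unfolding palindrome_def
  proof (rule nth_equalityI)
    fix i assume i: "i < length (rev (pref w n))"
    then have i': "i < n" by (simp add: pref_def)
    have "rev (pref w n) ! i = w (n - 1 - i)" using i' by (simp add: pref_def rev_nth)
    also have "\<dots> = w i" using h i' by metis
    also have "\<dots> = pref w n ! i" using i' by (simp add: pref_def)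
    finally show "rev (pref w n) ! i = pref w n ! i" .
  qed (simp add: pref_def)
qed
lemma pref_add: "pref w (a + c) = pref w a @ map (\<lambda>j. w (a + j)) [0..<c]"
  by (rule nth_equalityI) (auto simp: pref_def nth_append)

theorem lemma5p2:
  fixes w :: "nat \<Rightarrow> 'a" and n n' n'' :: nat
  assumes "n' \<le> n''" and "n'' \<le> n + n'"
    and "palindrome (pref w n)" and "palindrome (pref w n')" and "palindrome (pref w n'')"
  shows "(\<exists>b. pref w n = pref w (n + n' - n'') @ b \<and> pref w n'' = pref w n' @ b)
       \<and> (n'' \<ge> n - n' \<longrightarrow> palindrome (pref w (n + n' - n'')))"
proof -
  define m where "m = n + n' - n''"
  have A: "\<And>i. i < n \<Longrightarrow> w i = w (n - 1 - i)" using assms(3) pal_pref by blast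
  have A': "\<And>i. i < n' \<Longrightarrow> w i = w (n' - 1 - i)" using assms(4) pal_pref by blast
  have A'': "\<And>i. i < n'' \<Longrightarrow> w i = w (n'' - 1 - i)" using assms(5) pal_pref by blast
  have key: "\<And>j. j < n'' - n' \<Longrightarrow> w (m + j) = w (n' + j)"
  proof -
    fix j assume j: "j < n'' - n'"
    have lt1: "m + j < n" using j assms(1,2) m_def by auto
    have lt2: "n'' - n' - 1 - j < n''" using j by auto
    have "w (m + j) = w (n - 1 - (m + j))" using lt1 by (rule A)
    also have "n - 1 - (m + j) = n'' - n' - 1 - j" using j assms(1,2) m_def by auto
    also have "w (n'' - n' - 1 - j) = w (n'' - 1 - (n'' - n' - 1 - j))" using lt2 by (rule A'')
    also have "n'' - 1 - (n'' - n' - 1 - j) = n' + j" using j by auto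
    finally show "w (m + j) = w (n' + j)" .
  qed
  have n1: "n = m + (n'' - n')" using assms(1,2) m_def by auto
  have n2: "n'' = n' + (n'' - n')" using assms(1) by auto
  have P1: "\<exists>b. pref w n = pref w m @ b \<and> pref w n'' = pref w n' @ b"
  proof (intro exI conjI)
    have "pref w n = pref w (m + (n'' - n'))" using n1 by simp
    also have "\<dots> = pref w m @ map (\<lambda>j. w (m + j)) [0..<n'' - n']" by (rule pref_add)
    also have "map (\<lambda>j. w (m + j)) [0..<n'' - n'] = map (\<lambda>j. w (n' + j)) [0..<n'' - n']"
      using key by simp
    finally show "pref w n = pref w m @ map (\<lambda>j. w (n' + j)) [0..<n'' - n']" .
    have "pref w n'' = pref w (n' + (n'' - n'))" using assms(1) by simp
    also have "\<dots> = pref w n' @ map (\<lambda>j. w (n' + j)) [0..<n'' - n']" by (rule pref_add)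
    finally show "pref w n'' = pref w n' @ map (\<lambda>j. w (n' + j)) [0..<n'' - n']" .
  qed
  have P2: "palindrome (pref w m)" if h: "n'' \<ge> n - n'"
  proof -
    have lo: "w i = w (m - 1 - i)" if "i < m" "i < n'" for i
    proof -
      have lt1: "m - 1 - i < n" using that n1 by auto
      have lt2: "n'' - n' + i < n''" using that assms(1) by auto
      have "w (m - 1 - i) = w (n - 1 - (m - 1 - i))" using lt1 by (rule A)
      also have "n - 1 - (m - 1 - i) = n'' - n' + i" using that n1 by auto
      also have "w (n'' - n' + i) = w (n'' - 1 - (n'' - n' + i))" using lt2 by (rule A'')
      also have "n'' - 1 - (n'' - n' + i) = n' - 1 - i" using that assms(1) by auto
      also have "w (n' - 1 - i) = w i" using A'[of i] that by simp
      finally show ?thesis by simp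
    qed
    have "\<forall>i<m. w i = w (m - 1 - i)"
    proof (intro allI impI)
      fix i assume i: "i < m"
      show "w i = w (m - 1 - i)"
      proof (cases "i < n'")
        case True then show ?thesis using lo i by auto
      next
        case False
        have "m \<le> 2 * n'" using h m_def by auto
        then have "m - 1 - i < n'" using False i by auto
        moreover have "m - 1 - i < m" using i by auto
        ultimately have "w (m - 1 - i) = w (m - 1 - (m - 1 - i))" using lo by metis
        also have "m - 1 - (m - 1 - i) = i" using i by auto
        finally show ?thesis by simp
      qed
    qed
    then show ?thesis using pal_pref by blast
  qed
  show ?thesis using P1 P2 m_def by auto
qed

end
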